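(* Let $A\in\mathbb{R}^{d\times d}$, $B\in\mathbb{R}^{d\times p}$ with $\alpha(A)<0$, $\|A\|\le\kappa_A$, $\|B\|\le\kappa_B$ for constants $\kappa_A,\kappa_B>0$, and let $h=\frac{1}{15\kappa_A}$. Define $A'=e^{Ah}$ and $B'=\big[\int_0^he^{A(h-s)}ds\big]B$. Let $\widetilde{A}\in\mathbb{R}^{d\times d}$, $\widetilde{B}\in\mathbb{R}^{d\times p}$ satisfy $\|\widetilde{A}-A'\|\le\epsilon$ and $\|\widetilde{B}-B'\|\le\epsilon$ for some $\epsilon\le\frac{1}{15}$, and suppose $\|Ah\|\le\frac1{15}$. Define $$\hat{A}=\frac1h\sum_{k\ge1}\frac{(-1)^{k-1}}{k}(\widetilde{A}-I)^k,\qquad \hat{B}=\Big[\int_0^he^{\hat{A}t}dt\Big]^{-1}\widetilde{B}.$$ Then $$\|\hat{A}-A\|,\ \|\hat{B}-B\|\le\frac1h\Big(2+\frac{\kappa_B}{\kappa_A}\Big)\epsilon.$$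
   Context: $\alpha(A)=\max\{\Re(\lambda):\lambda\text{ eigenvalue of }A\}$; $\|\cdot\|$ is the spectral norm. In the paper, $\widetilde{A},\widetilde{B}$ are the least-squares estimates of the discretized dynamics $(A',B')$ produced by the identification algorithm, and $\hat{A},\hat{B}$ the recovered continuous-time estimates. *)

theory Defs
  imports "HOL-Analysis.Analysis"
begin

definition spec_norm :: "real^'n^'m \<Rightarrow> real" where
  "spec_norm M = onorm (\<lambda>x. M *v x)"

definition mpow :: "real^'n^'n \<Rightarrow> nat \<Rightarrow> real^'n^'n" where
  "mpow M k = ((\<lambda>X. M ** X) ^^ k) (mat 1)"

definition mexp :: "real^'n^'n \<Rightarrow> real^'n^'n" where
  "mexp M = (\<Sum>k. (1 / fact k) *\<^sub>R mpow M k)"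

definition cmat :: "real^'n^'n \<Rightarrow> complex^'n^'n" where
  "cmat M = (\<chi> i j. complex_of_real (M $ i $ j))"

definition eigenvalues :: "real^'n^'n \<Rightarrow> complex set" where
  "eigenvalues M = {c. \<exists>v. v \<noteq> 0 \<and> cmat M *v v = c *s v}"

definition spectral_abscissa :: "real^'n^'n \<Rightarrow> real" where
  "spectral_abscissa M = Max (Re ` eigenvalues M)"

text \<open>Matrix logarithm series  sum_{k>=1} (-1)^(k-1)/k X^k  (index shifted by one).\<close>
definition mlog_series :: "real^'n^'n \<Rightarrow> real^'n^'n" where
  "mlog_series X = (\<Sum>k. ((-1) ^ k / real (Suc k)) *\<^sub>R mpow X (Suc k))"

end

theory Submission
  imports Defs
begin


lemma spec_norm_ge0: "spec_norm M \<ge> 0"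
  unfolding spec_norm_def by (rule onorm_pos_le) simp

lemma spec_norm_apply: "norm (M *v x) \<le> spec_norm M * norm x"
  unfolding spec_norm_def by (rule onorm) simp

lemma spec_norm_le: "(\<And>x. norm (M *v x) \<le> b * norm x) \<Longrightarrow> spec_norm M \<le> b"
  unfolding spec_norm_def by (rule onorm_le)

lemma spec_norm_eq0: "spec_norm M = 0 \<longleftrightarrow> M = 0"
  unfolding spec_norm_def
  by (subst onorm_eq_0) (auto simp: matrix_eq)

lemma spec_norm_add: "spec_norm (M + N) \<le> spec_norm M + spec_norm N"
proof -
  have e: "(*v) (M+N) = (\<lambda>x. M *v x + N *v x)" by (rule ext) (simp add: matrix_vector_mult_add_rdistrib)
  show ?thesis unfolding spec_norm_def e
    by (rule onorm_triangle) simp_all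
qed

lemma spec_norm_scale: "spec_norm (c *\<^sub>R M) = \<bar>c\<bar> * spec_norm M"
proof -
  have e: "(*v) (c *\<^sub>R M) = (\<lambda>x. c *\<^sub>R (M *v x))"
    by (rule ext) (simp add: matrix_vector_mult_def vec_eq_iff sum_distrib_left mult.assoc)
  show ?thesis unfolding spec_norm_def e
    by (rule onorm_scaleR) simp
qed

lemma spec_norm_mult: "spec_norm (M ** N) \<le> spec_norm M * spec_norm N"
proof -
  have e: "(*v) (M ** N) = (\<lambda>x. M *v x) o (\<lambda>x. N *v x)" by (rule ext) (simp add: matrix_vector_mul_assoc)
  show ?thesis unfolding spec_norm_def e
    by (rule onorm_compose) simp_all
qed

lemma spec_norm_one: "spec_norm (mat 1 :: real^'n^'n) = 1"
proof -
  have e: "(*v) (mat 1 :: real^'n^'n) = (\<lambda>x. x)" by (rule ext) simp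
  show ?thesis unfolding spec_norm_def e by (rule onorm_id)
qed

lemma spec_norm_minus: "spec_norm (- M) = spec_norm M"
  using spec_norm_scale[of "-1" M] by simp

lemma entry_le_spec_norm: "\<bar>M $ i $ j\<bar> \<le> spec_norm M"
proof -
  have "M $ i $ j = (M *v axis j 1) $ i"
    by (simp add: matrix_vector_mult_def axis_def if_distrib cong: if_cong)
  then have "\<bar>M $ i $ j\<bar> \<le> norm (M *v axis j 1)" using component_le_norm_cart by metis
  also have "\<dots> \<le> spec_norm M * norm (axis j (1::real))" by (rule spec_norm_apply)
  finally show ?thesis by simp
qed

lemma norm_le_spec_norm: "norm (M::real^'n^'m) \<le> real CARD('m) * real CARD('n) * spec_norm M"
proof -
  have "norm M \<le> (\<Sum>i\<in>UNIV. norm (M $ i))" unfolding norm_vec_def[of M] by (rule L2_set_le_sum) simp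
  also have "\<dots> \<le> (\<Sum>i\<in>(UNIV::'m set). real CARD('n) * spec_norm M)"
  proof (rule sum_mono)
    fix i
    have "norm (M $ i) \<le> (\<Sum>j\<in>UNIV. \<bar>M $ i $ j\<bar>)" by (rule norm_le_l1_cart)
    also have "\<dots> \<le> (\<Sum>j\<in>(UNIV::'n set). spec_norm M)" by (rule sum_mono) (rule entry_le_spec_norm)
    finally show "norm (M $ i) \<le> real CARD('n) * spec_norm M" by simp
  qed
  finally show ?thesis by simp
qed

lemma spec_norm_le_norm: "spec_norm (M::real^'n^'m) \<le> real CARD('m) * real CARD('n) * norm M"
proof (rule spec_norm_le)
  fix x :: "real^'n"
  have "norm (M *v x) \<le> (\<Sum>i\<in>UNIV. \<bar>(M *v x) $ i\<bar>)" by (rule norm_le_l1_cart)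
  also have "\<dots> \<le> (\<Sum>i\<in>(UNIV::'m set). real CARD('n) * norm M * norm x)"
  proof (rule sum_mono)
    fix i
    have "\<bar>(M *v x) $ i\<bar> = \<bar>\<Sum>j\<in>UNIV. M $ i $ j * x $ j\<bar>" by (simp add: matrix_vector_mult_def)
    also have "\<dots> \<le> (\<Sum>j\<in>UNIV. \<bar>M $ i $ j * x $ j\<bar>)" by (rule sum_abs)
    also have "\<dots> \<le> (\<Sum>j\<in>(UNIV::'n set). norm M * norm x)"
    proof (rule sum_mono)
      fix j
      have "\<bar>M $ i $ j\<bar> \<le> norm M"
        using Finite_Cartesian_Product.norm_nth_le[of "M $ i" j] Finite_Cartesian_Product.norm_nth_le[of M i] by simp
      moreover have "\<bar>x $ j\<bar> \<le> norm x" by (rule component_le_norm_cart)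
      ultimately show "\<bar>M $ i $ j * x $ j\<bar> \<le> norm M * norm x"
        by (simp add: abs_mult mult_mono')
    qed
    finally show "\<bar>(M *v x) $ i\<bar> \<le> real CARD('n) * norm M * norm x" by simp
  qed
  finally show "norm (M *v x) \<le> real CARD('m) * real CARD('n) * norm M * norm x" by (simp add: algebra_simps)
qed

lemma mat_add_rdistrib: "((A::real^'n^'m) + B) ** C = A ** C + B ** C"
  by (simp add: matrix_matrix_mult_def vec_eq_iff sum.distrib distrib_right)

lemma mat_one_neq0: "(0::real^'n^'n) \<noteq> mat 1"
  by (auto simp: vec_eq_iff mat_def)

typedef 'n sqm = "UNIV :: (real^'n^'n) set" morphisms mat_of sqm_of by simp
setup_lifting type_definition_sqm

instantiation sqm :: (finite) real_normed_vector
begin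
lift_definition zero_sqm :: "'a sqm" is 0 .
lift_definition plus_sqm :: "'a sqm \<Rightarrow> 'a sqm \<Rightarrow> 'a sqm" is "(+)" .
lift_definition minus_sqm :: "'a sqm \<Rightarrow> 'a sqm \<Rightarrow> 'a sqm" is "(-)" .
lift_definition uminus_sqm :: "'a sqm \<Rightarrow> 'a sqm" is "uminus" .
lift_definition scaleR_sqm :: "real \<Rightarrow> 'a sqm \<Rightarrow> 'a sqm" is "scaleR" .
lift_definition norm_sqm :: "'a sqm \<Rightarrow> real" is spec_norm .
lift_definition dist_sqm :: "'a sqm \<Rightarrow> 'a sqm \<Rightarrow> real" is "\<lambda>M N. spec_norm (M - N)" .
lift_definition sgn_sqm :: "'a sqm \<Rightarrow> 'a sqm" is "\<lambda>M. inverse (spec_norm M) *\<^sub>R M" .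
definition uniformity_sqm :: "('a sqm \<times> 'a sqm) filter" where
  "uniformity_sqm = (INF e\<in>{0<..}. principal {(x, y). dist x y < e})"
definition open_sqm :: "'a sqm set \<Rightarrow> bool" where
  "open_sqm U \<longleftrightarrow> (\<forall>x\<in>U. eventually (\<lambda>(x', y). x' = x \<longrightarrow> y \<in> U) uniformity)"
instance
  apply standard
  apply (simp_all add: uniformity_sqm_def open_sqm_def)
  apply (transfer; simp add: algebra_simps spec_norm_eq0 spec_norm_add spec_norm_scale)+
  done
end

instantiation sqm :: (finite) real_normed_algebra_1
begin
lift_definition times_sqm :: "'a sqm \<Rightarrow> 'a sqm \<Rightarrow> 'a sqm" is "(**)" .
lift_definition one_sqm :: "'a sqm" is "mat 1" .
instance
proof
  fix x y z :: "'a sqm" and a :: real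
  show "x * y * z = x * (y * z)" by transfer (simp add: matrix_mul_assoc)
  show "1 * x = x" by transfer simp
  show "x * 1 = x" by transfer simp
  show "(x + y) * z = x * z + y * z" by transfer (simp add: mat_add_rdistrib)
  show "x * (y + z) = x * y + x * z" by transfer (simp add: matrix_add_ldistrib)
  show "(0::'a sqm) \<noteq> 1" by transfer (rule mat_one_neq0)
  show "a *\<^sub>R x * y = a *\<^sub>R (x * y)" by transfer (simp add: scalar_matrix_assoc)
  show "x * a *\<^sub>R y = a *\<^sub>R (x * y)" by transfer (simp add: matrix_scalar_ac scalar_matrix_assoc)
  show "norm (1::'a sqm) = 1" by transfer (rule spec_norm_one)
  show "norm (x * y) \<le> norm x * norm y" by transfer (rule spec_norm_mult)
qed
end


lemma mat_of_sqm_of[simp]: "mat_of (sqm_of M) = M"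
  by (simp add: sqm_of_inverse)

lemma norm_sqm_of: "norm (sqm_of M) = spec_norm M"
  by (simp add: norm_sqm.rep_eq)

lemma bl_mat_of: "bounded_linear (mat_of :: 'n::finite sqm \<Rightarrow> _)"
proof (rule bounded_linear_intro[where K="real CARD('n) * real CARD('n)"])
  fix x y :: "'n sqm" and r :: real
  show "mat_of (x + y) = mat_of x + mat_of y" by (simp add: plus_sqm.rep_eq)
  show "mat_of (r *\<^sub>R x) = r *\<^sub>R mat_of x" by (simp add: scaleR_sqm.rep_eq)
  show "norm (mat_of x) \<le> norm x * (real CARD('n) * real CARD('n))"
    using norm_le_spec_norm[of "mat_of x"] by (simp add: norm_sqm.rep_eq mult_ac)
qed

lemma bl_sqm_of: "bounded_linear (sqm_of :: real^'n^'n \<Rightarrow> 'n::finite sqm)"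
proof (rule bounded_linear_intro[where K="real CARD('n) * real CARD('n)"])
  fix x y :: "real^'n^'n" and r :: real
  show "sqm_of (x + y) = sqm_of x + sqm_of y" by (simp add: plus_sqm.abs_eq)
  show "sqm_of (r *\<^sub>R x) = r *\<^sub>R sqm_of x" by (simp add: scaleR_sqm.abs_eq)
  show "norm (sqm_of x) \<le> norm x * (real CARD('n) * real CARD('n))"
    using spec_norm_le_norm[of x] by (simp add: norm_sqm_of mult_ac)
qed

instance sqm :: (finite) banach
proof
  fix X :: "nat \<Rightarrow> 'a sqm"
  assume "Cauchy X"
  then have "Cauchy (\<lambda>n. mat_of (X n))" by (rule bounded_linear.Cauchy[OF bl_mat_of])
  then obtain L where "(\<lambda>n. mat_of (X n)) \<longlonglongrightarrow> L" using Cauchy_convergent_iff convergent_def by blast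
  then have "(\<lambda>n. sqm_of (mat_of (X n))) \<longlonglongrightarrow> sqm_of L" by (rule bounded_linear.tendsto[OF bl_sqm_of])
  then show "convergent X" by (simp add: mat_of_inverse convergent_def) blast
qed



lemma norm_sums_le:
  fixes f :: "nat \<Rightarrow> 'a::banach"
  assumes "f sums s" "g sums t" "\<And>n. norm (f n) \<le> g n"
  shows "norm s \<le> t"
proof -
  have sg: "summable g" using assms(2) by (simp add: sums_summable)
  have sn: "summable (\<lambda>n. norm (f n))"
    by (rule summable_comparison_test[OF _ sg]) (use assms(3) in auto)
  have "norm s = norm (suminf f)" using sums_unique[OF assms(1)] by simp
  also have "\<dots> \<le> (\<Sum>n. norm (f n))" by (rule summable_norm[OF sn])
  also have "\<dots> \<le> suminf g" by (rule suminf_le[OF assms(3) sn sg])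
  also have "\<dots> = t" using sums_unique[OF assms(2)] by simp
  finally show ?thesis .
qed

lemma norm_power_diff:
  fixes x y :: "'a::real_normed_algebra_1"
  assumes "norm x \<le> r" "norm y \<le> r"
  shows "norm (x ^ Suc n - y ^ Suc n) \<le> real (Suc n) * r ^ n * norm (x - y)"
proof (induction n)
  case 0
  then show ?case by simp
next
  case (Suc n)
  have r0: "0 \<le> r" using assms(1) norm_ge_zero order_trans by blast
  have "x ^ Suc (Suc n) - y ^ Suc (Suc n) = x * (x ^ Suc n - y ^ Suc n) + (x - y) * y ^ Suc n"
    by (simp add: algebra_simps)
  also have "norm \<dots> \<le> norm (x * (x ^ Suc n - y ^ Suc n)) + norm ((x - y) * y ^ Suc n)"
    by (rule norm_triangle_ineq)
  also have "\<dots> \<le> r * (real (Suc n) * r ^ n * norm (x - y)) + norm (x - y) * r ^ Suc n"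
  proof (rule add_mono)
    show "norm (x * (x ^ Suc n - y ^ Suc n)) \<le> r * (real (Suc n) * r ^ n * norm (x - y))"
      using norm_mult_ineq[of x "x ^ Suc n - y ^ Suc n"] Suc.IH assms(1) r0
      by (meson mult_mono norm_ge_zero order_trans)
    have "norm (y ^ Suc n) \<le> r ^ Suc n"
      using norm_power_ineq[of y "Suc n"] power_mono[OF assms(2) norm_ge_zero, of "Suc n"] by linarith
    then show "norm ((x - y) * y ^ Suc n) \<le> norm (x - y) * r ^ Suc n"
      using norm_mult_ineq[of "x - y" "y ^ Suc n"]
      by (meson mult_left_mono norm_ge_zero order_trans)
  qed
  also have "\<dots> = real (Suc (Suc n)) * r ^ Suc n * norm (x - y)"
    by (simp add: algebra_simps)
  finally show ?case .
qed

lemma norm_exp_diff: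
  fixes x y :: "'a::{real_normed_algebra_1,banach}"
  assumes "norm x \<le> r" "norm y \<le> r"
  shows "norm (exp x - exp y) \<le> exp r * norm (x - y)"
proof -
  define f where "f n = (x ^ n - y ^ n) /\<^sub>R fact n" for n
  have "f sums (exp x - exp y)"
    unfolding f_def scaleR_diff_right by (intro sums_diff exp_converges)
  then have s1: "(\<lambda>n. f (Suc n)) sums (exp x - exp y)"
    by (subst sums_Suc_iff) (simp add: f_def)
  have s2: "(\<lambda>n. r ^ n /\<^sub>R fact n * norm (x - y)) sums (exp r * norm (x - y))"
    by (intro sums_mult2 exp_converges)
  show ?thesis
  proof (rule norm_sums_le[OF s1 s2])
    fix n
    have "norm (f (Suc n)) = norm (x ^ Suc n - y ^ Suc n) / fact (Suc n)"
      unfolding f_def by (simp add: divide_inverse mult.commute del: power_Suc)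
    also have "\<dots> \<le> real (Suc n) * r ^ n * norm (x - y) / fact (Suc n)"
      by (intro divide_right_mono norm_power_diff assms) simp
    also have "\<dots> = (real (Suc n) * (r ^ n * norm (x - y))) / (real (Suc n) * fact n)"
      by (simp only: fact_Suc mult.assoc of_nat_fact)
    also have "\<dots> = (r ^ n * norm (x - y)) / fact n"
      by (rule nonzero_mult_divide_mult_cancel_left) simp
    also have "\<dots> = r ^ n /\<^sub>R fact n * norm (x - y)"
      by (simp add: divide_inverse mult_ac)
    finally show "norm (f (Suc n)) \<le> r ^ n /\<^sub>R fact n * norm (x - y)" .
  qed
qed

definition lg :: "'a::{real_normed_algebra_1,banach} \<Rightarrow> 'a" where
  "lg x = (\<Sum>k. ((-1) ^ k / real (Suc k)) *\<^sub>R x ^ Suc k)"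

lemma lg_summable:
  fixes x :: "'a::{real_normed_algebra_1,banach}"
  assumes "norm x < 1"
  shows "summable (\<lambda>k. ((-1) ^ k / real (Suc k)) *\<^sub>R x ^ Suc k)"
proof (rule summable_comparison_test)
  show "summable (\<lambda>k. norm x ^ Suc k)"
    using assms by (simp add: summable_geometric)
  show "\<exists>N. \<forall>n\<ge>N. norm (((-1) ^ n / real (Suc n)) *\<^sub>R x ^ Suc n) \<le> norm x ^ Suc n"
  proof (intro exI allI impI)
    fix n :: nat
    have "norm (((-1) ^ n / real (Suc n)) *\<^sub>R x ^ Suc n) = norm (x ^ Suc n) / real (Suc n)"
      by (simp add: abs_mult power_abs)
    also have "\<dots> \<le> norm (x ^ Suc n) / 1"
      by (rule divide_left_mono) auto
    also have "\<dots> \<le> norm (x ^ Suc n)" by simp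
    also have "\<dots> \<le> norm x ^ Suc n" by (rule norm_power_ineq)
    finally show "norm (((-1) ^ n / real (Suc n)) *\<^sub>R x ^ Suc n) \<le> norm x ^ Suc n" .
  qed
qed

lemma lg_lipschitz:
  fixes x y :: "'a::{real_normed_algebra_1,banach}"
  assumes "norm x \<le> r" "norm y \<le> r" "r < 1"
  shows "norm (lg x - lg y) \<le> norm (x - y) / (1 - r)"
proof -
  have x1: "norm x < 1" and y1: "norm y < 1" using assms by auto
  have r0: "0 \<le> r" using assms(1) norm_ge_zero order_trans by blast
  have s1: "(\<lambda>k. ((-1) ^ k / real (Suc k)) *\<^sub>R (x ^ Suc k - y ^ Suc k)) sums (lg x - lg y)"
    unfolding lg_def scaleR_diff_right
    by (intro sums_diff summable_sums lg_summable x1 y1)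
  have s2: "(\<lambda>k. r ^ k * norm (x - y)) sums (1 / (1 - r) * norm (x - y))"
    by (intro sums_mult2 geometric_sums) (use assms r0 in auto)
  have "norm (lg x - lg y) \<le> 1 / (1 - r) * norm (x - y)"
  proof (rule norm_sums_le[OF s1 s2])
    fix n
    have "norm (((-1) ^ n / real (Suc n)) *\<^sub>R (x ^ Suc n - y ^ Suc n)) = norm (x ^ Suc n - y ^ Suc n) / real (Suc n)"
      by (simp add: abs_mult power_abs)
    also have "\<dots> \<le> real (Suc n) * r ^ n * norm (x - y) / real (Suc n)"
      by (intro divide_right_mono norm_power_diff assms) simp
    also have "\<dots> = r ^ n * norm (x - y)" by simp
    finally show "norm (((-1) ^ n / real (Suc n)) *\<^sub>R (x ^ Suc n - y ^ Suc n)) \<le> r ^ n * norm (x - y)" .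
  qed
  then show ?thesis by simp
qed

lemma lg_zero[simp]: "lg 0 = 0"
  by (simp add: lg_def)


lemma pow_commute:
  fixes a b :: "'a::monoid_mult"
  assumes "a * b = b * a"
  shows "a ^ n * b = b * a ^ n"
proof (induction n)
  case 0 then show ?case by simp
next
  case (Suc n)
  have "a ^ Suc n * b = a * (a ^ n * b)" by (simp add: mult.assoc)
  also have "\<dots> = (a * b) * a ^ n" by (simp add: Suc.IH mult.assoc)
  also have "\<dots> = b * a ^ Suc n" by (simp add: assms mult.assoc)
  finally show ?case .
qed

lemma vd_power:
  fixes g :: "real \<Rightarrow> 'a::real_normed_algebra_1"
  assumes g: "(g has_vector_derivative g') (at s within S)" and c: "g s * g' = g' * g s"
  shows "((\<lambda>t. g t ^ Suc n) has_vector_derivative (real (Suc n) *\<^sub>R (g s ^ n * g'))) (at s within S)"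
proof (induction n)
  case 0 then show ?case using g by simp
next
  case (Suc n)
  have "((\<lambda>t. g t * g t ^ Suc n) has_vector_derivative
          (g s * (real (Suc n) *\<^sub>R (g s ^ n * g')) + g' * g s ^ Suc n)) (at s within S)"
    by (rule has_vector_derivative_mult[OF g Suc.IH])
  moreover have "(\<lambda>t. g t * g t ^ Suc n) = (\<lambda>t. g t ^ Suc (Suc n))"
    by (simp only: power_Suc)
  moreover have "g s * (real (Suc n) *\<^sub>R (g s ^ n * g')) + g' * g s ^ Suc n
      = real (Suc (Suc n)) *\<^sub>R (g s ^ Suc n * g')"
  proof -
    define z where "z = g s ^ Suc n * g'"
    have h2: "g' * g s ^ Suc n = z" unfolding z_def by (rule pow_commute[OF c, symmetric])
    have h1: "g s * (real (Suc n) *\<^sub>R (g s ^ n * g')) = real (Suc n) *\<^sub>R z"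
      unfolding z_def by (simp only: mult_scaleR_right power_Suc mult.assoc)
    have "real (Suc n) *\<^sub>R z + z = (real (Suc n) + 1) *\<^sub>R z"
      by (simp only: scaleR_left_distrib scaleR_one)
    also have "\<dots> = real (Suc (Suc n)) *\<^sub>R z" by simp
    finally show ?thesis unfolding h1 h2 z_def .
  qed
  ultimately show ?case by simp
qed

lemma neg_pow_scaleR:
  fixes x :: "'a::real_normed_algebra_1"
  shows "((-1::real) ^ i) *\<^sub>R (x ^ i) = (-x) ^ i"
proof (induction i)
  case 0 then show ?case by simp
next
  case (Suc i)
  have "(-x) ^ Suc i = (-x) * ((-1::real) ^ i *\<^sub>R x ^ i)" using Suc.IH by simp
  then show ?case by simp
qed

lemma lg_exp:
  fixes y :: "'a::{real_normed_algebra_1,banach}"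
  assumes ny: "norm y \<le> 1/2"
  shows "lg (exp y - 1) = y"
proof -
  define u where "u s = exp (s *\<^sub>R y) - 1" for s
  define u' where "u' s = exp (s *\<^sub>R y) * y" for s
  define S where "S = {0..1::real}"
  have ub: "norm (u s) \<le> 7/8" if "s \<in> S" for s
  proof -
    have s1: "\<bar>s\<bar> \<le> 1" using that by (auto simp: S_def)
    have ns: "norm (s *\<^sub>R y) \<le> norm y"
      using s1 by (simp add: mult_left_le_one_le)
    have "norm (u s) = norm (exp (s *\<^sub>R y) - exp 0)" by (simp add: u_def)
    also have "\<dots> \<le> exp (norm y) * norm (s *\<^sub>R y - 0)"
      by (rule norm_exp_diff[OF ns]) simp
    also have "\<dots> \<le> exp (1/2) * (1/2)"
      using ns ny by (intro mult_mono) auto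
    also have "\<dots> \<le> 7/8"
    proof -
      have "exp (1/2::real) \<le> 7/4" using exp_bound[of "1/2::real"] by (simp add: power2_eq_square)
      then show ?thesis by simp
    qed
    finally show ?thesis .
  qed
  have du: "(u has_vector_derivative u' s) (at s within S)" for s
    using has_vector_derivative_diff[OF exp_scaleR_has_vector_derivative_right[of y s S] has_vector_derivative_const[of 1]]
    by (simp add: u_def[abs_def] u'_def)
  have comm: "u s * u' s = u' s * u s" for s
  proof -
    define E where "E = exp (s *\<^sub>R y)"
    have c: "E * y = y * E" unfolding E_def by (rule exp_times_scaleR_commute)
    have "u' s * u s = E * (y * E) - E * y" by (simp add: u_def u'_def E_def algebra_simps)
    also have "\<dots> = E * (E * y) - E * y" using c by simp
    also have "\<dots> = u s * u' s" by (simp add: u_def u'_def E_def algebra_simps)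
    finally show ?thesis by simp
  qed
  define c where "c k = ((-1::real) ^ k / real (Suc k))" for k
  define f where "f k s = c k *\<^sub>R u s ^ Suc k" for k s
  define d where "d k s = (-u s) ^ k * u' s" for k s
  have df: "(f k has_derivative (\<lambda>h. h *\<^sub>R d k s)) (at s within S)" for k s
  proof -
    have hv: "((\<lambda>t. c k *\<^sub>R u t ^ Suc k) has_vector_derivative
        (c k *\<^sub>R (real (Suc k) *\<^sub>R (u s ^ k * u' s)) + 0 *\<^sub>R u s ^ Suc k)) (at s within S)"
      by (rule has_vector_derivative_scaleR[OF _ vd_power[OF du comm]]) simp
    have eq: "c k *\<^sub>R (real (Suc k) *\<^sub>R (u s ^ k * u' s)) + 0 *\<^sub>R u s ^ Suc k = d k s"
    proof -
      have "c k *\<^sub>R (real (Suc k) *\<^sub>R (u s ^ k * u' s)) = ((-1::real) ^ k) *\<^sub>R (u s ^ k * u' s)"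
        by (simp add: c_def)
      also have "\<dots> = (((-1::real) ^ k) *\<^sub>R u s ^ k) * u' s" by simp
      also have "\<dots> = d k s" by (simp only: neg_pow_scaleR d_def)
      finally show ?thesis by simp
    qed
    from hv[unfolded eq] show ?thesis unfolding f_def[abs_def] has_vector_derivative_def .
  qed
  have dsum: "(\<Sum>i<n. d i s) = y - (-u s) ^ n * y" for n s
  proof -
    have "u' s = (1 + u s) * y" by (simp add: u_def u'_def)
    then have "(\<Sum>i<n. d i s) = (\<Sum>i<n. ((-u s) ^ i - (-u s) ^ Suc i) * y)"
      by (intro sum.cong refl) (simp add: d_def algebra_simps power_Suc2 del: power_Suc)
    also have "\<dots> = (\<Sum>i<n. (-u s) ^ i - (-u s) ^ Suc i) * y"
      by (simp add: sum_distrib_right)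
    also have "\<dots> = y - (-u s) ^ n * y"
      by (simp only: sum_lessThan_telescope') (simp add: algebra_simps)
    finally show ?thesis .
  qed
  have unif: "\<forall>\<^sub>F n in sequentially. \<forall>s\<in>S. \<forall>h. norm ((\<Sum>i<n. h *\<^sub>R d i s) - h *\<^sub>R y) \<le> e * norm h"
    if e: "e > 0" for e
  proof -
    have "((\<lambda>n. (7/8::real) ^ n) \<longlongrightarrow> 0) sequentially" by (rule LIMSEQ_power_zero) simp
    then have ev: "\<forall>\<^sub>F n in sequentially. (7/8::real) ^ n < e" using e by (rule order_tendstoD(2))
    show ?thesis
    proof (rule eventually_mono[OF ev], intro ballI allI)
      fix n s h
      assume n: "(7/8::real) ^ n < e" and s: "s \<in> S"
      have "(\<Sum>i<n. h *\<^sub>R d i s) - h *\<^sub>R y = h *\<^sub>R (- ((-u s) ^ n * y))"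
        by (simp add: scaleR_sum_right[symmetric] dsum algebra_simps)
      then have "norm ((\<Sum>i<n. h *\<^sub>R d i s) - h *\<^sub>R y) = \<bar>h\<bar> * norm ((-u s) ^ n * y)"
        by simp
      also have "\<dots> \<le> \<bar>h\<bar> * e"
      proof (rule mult_left_mono)
        have "norm ((-u s) ^ n * y) \<le> norm ((-u s) ^ n) * norm y" by (rule norm_mult_ineq)
        also have "\<dots> \<le> (7/8) ^ n * 1"
        proof (rule mult_mono)
          have "norm ((-u s) ^ n) \<le> norm (-u s) ^ n" by (rule norm_power_ineq)
          also have "\<dots> \<le> (7/8) ^ n" using ub[OF s] by (simp add: power_mono)
          finally show "norm ((-u s) ^ n) \<le> (7/8) ^ n" .
        qed (use ny in auto)
        finally show "norm ((-u s) ^ n * y) \<le> e" using n by simp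
      qed simp
      finally show "norm ((\<Sum>i<n. h *\<^sub>R d i s) - h *\<^sub>R y) \<le> e * norm h" by (simp add: mult.commute)
    qed
  qed
  have f0: "f n 0 = 0" for n by (simp add: f_def u_def)
  have "\<exists>g. \<forall>s\<in>S. (\<lambda>n. f n s) sums (g s) \<and> (g has_derivative (\<lambda>h. h *\<^sub>R y)) (at s within S)"
    apply (rule has_derivative_series[of S f "\<lambda>k s h. h *\<^sub>R d k s" "\<lambda>s h. h *\<^sub>R y" 0 0])
        apply (simp add: S_def)
       apply (rule df)
      apply (rule unif, assumption)
     apply (simp add: S_def)
    apply (simp add: f0)
    done
  then obtain g where g: "\<And>s. s \<in> S \<Longrightarrow> (\<lambda>n. f n s) sums (g s)"
    "\<And>s. s \<in> S \<Longrightarrow> (g has_derivative (\<lambda>h. h *\<^sub>R y)) (at s within S)" by blast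
  have lin: "((\<lambda>s. s *\<^sub>R y) has_derivative (\<lambda>h. h *\<^sub>R y)) (at s within S)" for s
  proof -
    have "((\<lambda>s. s *\<^sub>R y) has_vector_derivative (s *\<^sub>R 0 + 1 *\<^sub>R y)) (at s within S)"
      by (rule has_vector_derivative_scaleR) (auto intro: derivative_eq_intros)
    then show ?thesis by (simp add: has_vector_derivative_def)
  qed
  have "\<exists>k. \<forall>s\<in>S. g s - s *\<^sub>R y = k"
  proof (rule has_derivative_zero_constant)
    show "convex S" by (simp add: S_def)
    fix s assume "s \<in> S"
    have "((\<lambda>s. g s - s *\<^sub>R y) has_derivative (\<lambda>h. h *\<^sub>R y - h *\<^sub>R y)) (at s within S)"
      by (rule has_derivative_diff[OF g(2)[OF \<open>s \<in> S\<close>] lin])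
    then show "((\<lambda>s. g s - s *\<^sub>R y) has_derivative (\<lambda>h. 0)) (at s within S)" by simp
  qed
  then obtain k where k: "\<And>s. s \<in> S \<Longrightarrow> g s - s *\<^sub>R y = k" by blast
  have "g 0 = 0"
  proof -
    have "(\<lambda>n. f n 0) sums (g 0)" by (rule g(1)) (simp add: S_def)
    then show ?thesis by (simp add: f0 sums_zero sums_unique2[OF _ sums_zero])
  qed
  then have "k = 0" using k[of 0] by (simp add: S_def)
  then have g1: "g 1 = y" using k[of 1] by (simp add: S_def)
  have "(\<lambda>n. f n 1) sums (g 1)" by (rule g(1)) (simp add: S_def)
  then have "(\<lambda>k. c k *\<^sub>R (exp y - 1) ^ Suc k) sums y" by (simp add: f_def u_def g1)
  then show ?thesis unfolding lg_def c_def by (rule sums_unique[symmetric])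
qed


lemma sqm_of_mult: "sqm_of (M ** N) = sqm_of M * sqm_of N"
  by (simp add: times_sqm.abs_eq)
lemma sqm_of_one: "sqm_of (mat 1) = 1"
  by (simp add: one_sqm.abs_eq)
lemma sqm_of_add: "sqm_of (M + N) = sqm_of M + sqm_of N"
  by (simp add: plus_sqm.abs_eq)
lemma sqm_of_diff: "sqm_of (M - N) = sqm_of M - sqm_of N"
  by (simp add: minus_sqm.abs_eq)
lemma sqm_of_scale: "sqm_of (c *\<^sub>R M) = c *\<^sub>R sqm_of M"
  by (simp add: scaleR_sqm.abs_eq)
lemma norm_mat_of: "spec_norm (mat_of x) = norm x"
  by (simp add: norm_sqm.rep_eq)

lemma sqm_of_mpow: "sqm_of (mpow M k) = sqm_of M ^ k"
  by (induction k) (simp_all add: mpow_def sqm_of_one sqm_of_mult)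

lemma mat_of_eq_iff: "mat_of x = M \<longleftrightarrow> x = sqm_of M"
  by (metis mat_of_inverse mat_of_sqm_of)

lemma mexp_eq: "mexp M = mat_of (exp (sqm_of M))"
proof -
  have "(\<lambda>n. mat_of ((sqm_of M) ^ n /\<^sub>R fact n)) sums mat_of (exp (sqm_of M))"
    by (rule bounded_linear.sums[OF bl_mat_of exp_converges])
  moreover have "mat_of ((sqm_of M) ^ n /\<^sub>R fact n) = (1 / fact n) *\<^sub>R mpow M n" for n
    by (simp add: mat_of_eq_iff sqm_of_scale sqm_of_mpow divide_inverse)
  ultimately have "(\<lambda>n. (1 / fact n) *\<^sub>R mpow M n) sums mat_of (exp (sqm_of M))" by simp
  then show ?thesis unfolding mexp_def by (rule sums_unique[symmetric])
qed

lemma mlog_eq: "spec_norm M < 1 \<Longrightarrow> mlog_series M = mat_of (lg (sqm_of M))"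
proof -
  assume "spec_norm M < 1"
  then have "norm (sqm_of M) < 1" by (simp add: norm_sqm_of)
  then have "(\<lambda>k. mat_of (((-1) ^ k / real (Suc k)) *\<^sub>R sqm_of M ^ Suc k)) sums mat_of (lg (sqm_of M))"
    unfolding lg_def by (intro bounded_linear.sums[OF bl_mat_of] summable_sums lg_summable)
  moreover have "mat_of (((-1) ^ k / real (Suc k)) *\<^sub>R sqm_of M ^ Suc k) = ((-1) ^ k / real (Suc k)) *\<^sub>R mpow M (Suc k)" for k
    by (simp only: mat_of_eq_iff sqm_of_scale sqm_of_mpow)
  ultimately have "(\<lambda>k. ((-1) ^ k / real (Suc k)) *\<^sub>R mpow M (Suc k)) sums mat_of (lg (sqm_of M))"
    by (simp del: power_Suc of_nat_Suc)
  then show ?thesis unfolding mlog_series_def by (rule sums_unique[symmetric])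
qed

lemma cont_exp_scale: "continuous_on T f \<Longrightarrow> continuous_on T (\<lambda>t. exp (f t *\<^sub>R a))"
  for a :: "'a::{real_normed_algebra_1,banach}"
proof -
  assume f: "continuous_on T f"
  have "continuous_on UNIV (\<lambda>t. exp (t *\<^sub>R a))"
    by (rule continuous_at_imp_continuous_on)
       (intro ballI has_vector_derivative_continuous[OF exp_scaleR_has_vector_derivative_right[of a _ UNIV]])
  then show ?thesis using continuous_on_compose2[OF _ f] by blast
qed

lemma int_transfer:
  fixes F :: "real \<Rightarrow> 'n::finite sqm"
  assumes "continuous_on {a..b} F"
  shows "integral {a..b} (\<lambda>s. mat_of (F s)) = mat_of (integral {a..b} F)"
proof -
  have "(F has_integral integral {a..b} F) {a..b}"
    using integrable_continuous_interval[OF assms] by (simp add: integrable_integral)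
  from has_integral_linear[OF this bl_mat_of] show ?thesis
    by (simp add: o_def integral_unique)
qed

lemma int_reflect:
  fixes F :: "real \<Rightarrow> 'a::banach"
  assumes "continuous_on {0..h} F" "0 \<le> h"
  shows "integral {0..h} (\<lambda>s. F (h - s)) = integral {0..h} F"
proof -
  have "(F has_integral integral {0..h} F) (cbox 0 h)"
    using integrable_continuous_interval[OF assms(1)] by (simp add: integrable_integral)
  from has_integral_affinity[OF this, of "-1" h]
  have "((\<lambda>x. F (h - x)) has_integral integral {0..h} F) ((\<lambda>x. - x + h) ` {0..h})"
    by simp
  moreover have "(\<lambda>x. - x + h) ` {0..h} = {0..h}"
  proof
    show "(\<lambda>x. - x + h) ` {0..h} \<subseteq> {0..h}" by auto
    show "{0..h} \<subseteq> (\<lambda>x. - x + h) ` {0..h}"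
    proof
      fix x assume "x \<in> {0..h}"
      then show "x \<in> (\<lambda>x. - x + h) ` {0..h}" by (intro image_eqI[of _ _ "h - x"]) auto
    qed
  qed
  ultimately show ?thesis by (simp add: integral_unique)
qed


lemma sqm_of_mat_of[simp]: "sqm_of (mat_of x) = x"
  by (rule mat_of_inverse)

lemma int_diff_cont:
  fixes F G :: "real \<Rightarrow> 'a::banach"
  assumes "continuous_on {a..b} F" "continuous_on {a..b} G"
  shows "integral {a..b} (\<lambda>s. F s - G s) = integral {a..b} F - integral {a..b} G"
  by (intro Henstock_Kurzweil_Integration.integral_diff integrable_continuous_interval assms)

lemma int_bound:
  fixes F :: "real \<Rightarrow> 'a::banach"
  assumes "continuous_on {0..h} F" "0 \<le> h" "0 \<le> B" "\<And>s. s \<in> {0..h} \<Longrightarrow> norm (F s) \<le> B"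
  shows "norm (integral {0..h} F) \<le> B * h"
proof -
  have "(F has_integral integral {0..h} F) (cbox 0 h)"
    using integrable_continuous_interval[OF assms(1)] by (simp add: integrable_integral)
  from has_integral_bound[OF assms(3) this] assms(2,4) show ?thesis by simp
qed

lemma mat_diff_ldistrib: "(A::real^'n^'m) ** (B - C) = A ** B - A ** C"
  by (simp add: matrix_matrix_mult_def vec_eq_iff sum_subtractf right_diff_distrib)

lemma mat_diff_rdistrib: "((A::real^'n^'m) - B) ** C = A ** C - B ** C"
  by (simp add: matrix_matrix_mult_def vec_eq_iff sum_subtractf left_diff_distrib)

lemma matrix_inv_props:
  fixes M :: "real^'n^'n"
  assumes "invertible M"
  shows "M ** matrix_inv M = mat 1 \<and> matrix_inv M ** M = mat 1"
  using assms unfolding invertible_def matrix_inv_def by (rule someI_ex)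

lemma exp_small:
  fixes c :: real
  assumes "0 \<le> c" "c \<le> 1"
  shows "exp c \<le> 1 + c + c * c"
  using exp_bound[OF assms] by (simp add: power2_eq_square)


theorem lemma2:
  fixes A :: "real^'d^'d" and B :: "real^'p^'d"
    and At :: "real^'d^'d" and Bt :: "real^'p^'d"
    and \<kappa>A \<kappa>B h \<epsilon> :: real
  assumes "spectral_abscissa A < 0"
    and "\<kappa>A > 0" and "\<kappa>B > 0"
    and "spec_norm A \<le> \<kappa>A" and "spec_norm B \<le> \<kappa>B"
    and "h = 1 / (15 * \<kappa>A)"
    and "spec_norm (At - mexp (h *\<^sub>R A)) \<le> \<epsilon>"
    and "spec_norm (Bt - integral {0..h} (\<lambda>s. mexp ((h - s) *\<^sub>R A)) ** B) \<le> \<epsilon>"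
    and "\<epsilon> \<le> 1 / 15"
    and "spec_norm (h *\<^sub>R A) \<le> 1 / 15"
  shows "spec_norm ((1 / h) *\<^sub>R mlog_series (At - mat 1) - A) \<le> (1 / h) * (2 + \<kappa>B / \<kappa>A) * \<epsilon>
     \<and> spec_norm (matrix_inv (integral {0..h} (\<lambda>t. mexp (t *\<^sub>R ((1 / h) *\<^sub>R mlog_series (At - mat 1))))) ** Bt - B)
         \<le> (1 / h) * (2 + \<kappa>B / \<kappa>A) * \<epsilon>"
proof -
  have hpos: "h > 0" using assms(2,6) by simp
  have eps0: "0 \<le> \<epsilon>" using assms(7) spec_norm_ge0 order_trans by blast
  have kr: "\<kappa>B / \<kappa>A = 15 * h * \<kappa>B" using assms(2,6) by (simp add: field_simps)
  define a where "a = sqm_of A"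
  define aT where "aT = sqm_of At"
  define y where "y = h *\<^sub>R a"
  have ny: "norm y \<le> 1/15" using assms(10) by (simp add: y_def a_def sqm_of_scale[symmetric] norm_sqm_of)
  have ey: "mexp (h *\<^sub>R A) = mat_of (exp y)" by (simp add: mexp_eq y_def a_def sqm_of_scale)
  have hA: "norm (aT - exp y) \<le> \<epsilon>"
    using assms(7) by (simp add: ey aT_def norm_sqm_of[symmetric] sqm_of_diff)
  have e15: "exp (1/15::real) \<le> 27/25" using exp_small[of "1/15"] by simp
  have e320: "exp (3/20::real) \<le> 59/50" using exp_small[of "3/20"] by simp
  define x' where "x' = exp y - 1"
  define xt where "xt = aT - 1"
  have nx': "norm x' \<le> 9/125"
  proof -
    have "norm x' = norm (exp y - exp 0)" by (simp add: x'_def)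
    also have "\<dots> \<le> exp (1/15) * norm (y - 0)" by (rule norm_exp_diff[OF ny]) simp
    also have "\<dots> \<le> 27/25 * (1/15)" using e15 ny by (intro mult_mono) auto
    finally show ?thesis by simp
  qed
  have dx: "xt - x' = aT - exp y" by (simp add: xt_def x'_def)
  have nxt: "norm xt \<le> 7/50"
  proof -
    have "norm xt \<le> norm x' + norm (xt - x')" by (rule norm_triangle_sub)
    then show ?thesis using nx' hA assms(9) dx by simp
  qed
  have lgx': "lg x' = y" unfolding x'_def by (rule lg_exp) (use ny in simp)
  define z where "z = lg xt"
  have dz: "norm (z - y) \<le> \<epsilon> / (43/50)"
  proof -
    have "norm (lg xt - lg x') \<le> norm (xt - x') / (1 - 7/50)"
      by (rule lg_lipschitz) (use nxt nx' in auto)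
    also have "\<dots> \<le> \<epsilon> / (43/50)" using hA dx by (simp add: divide_right_mono)
    finally show ?thesis by (simp add: z_def lgx')
  qed
  have dz2: "\<epsilon> / (43/50) \<le> 50/645" using assms(9) by simp
  have nz: "norm z \<le> 3/20"
  proof -
    have "norm z \<le> norm y + norm (z - y)" by (rule norm_triangle_sub)
    then show ?thesis using ny dz dz2 by simp
  qed
  have mlog: "mlog_series (At - mat 1) = mat_of z"
  proof -
    have "spec_norm (At - mat 1) = norm xt" by (simp add: xt_def aT_def norm_sqm_of[symmetric] sqm_of_diff sqm_of_one)
    then have "spec_norm (At - mat 1) < 1" using nxt by simp
    from mlog_eq[OF this] show ?thesis by (simp add: z_def xt_def aT_def sqm_of_diff sqm_of_one)
  qed
  define ah where "ah = (1/h) *\<^sub>R z"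
  have aeq: "a = (1/h) *\<^sub>R y" using hpos by (simp add: y_def)
  have Ah_eq: "sqm_of ((1 / h) *\<^sub>R mlog_series (At - mat 1)) = ah"
    by (simp add: mlog sqm_of_scale ah_def)
  have part1: "spec_norm ((1 / h) *\<^sub>R mlog_series (At - mat 1) - A) \<le> (1 / h) * (2 + \<kappa>B / \<kappa>A) * \<epsilon>"
  proof -
    have "spec_norm ((1 / h) *\<^sub>R mlog_series (At - mat 1) - A) = norm (ah - a)"
      by (simp add: norm_sqm_of[symmetric] sqm_of_diff Ah_eq a_def)
    also have "ah - a = (1/h) *\<^sub>R (z - y)" by (simp add: ah_def aeq scaleR_diff_right)
    also have "norm \<dots> = (1/h) * norm (z - y)" using hpos by simp
    also have "\<dots> \<le> (1/h) * (\<epsilon> / (43/50))" using dz hpos by (intro mult_left_mono) auto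
    also have "\<dots> \<le> (1 / h) * (2 + \<kappa>B / \<kappa>A) * \<epsilon>"
    proof -
      have "\<epsilon> / (43/50) \<le> 2 * \<epsilon>" using eps0 by simp
      also have "\<dots> \<le> (2 + \<kappa>B / \<kappa>A) * \<epsilon>"
        using eps0 assms(2,3) by (intro mult_right_mono) auto
      finally have "\<epsilon> / (43/50) \<le> (2 + \<kappa>B / \<kappa>A) * \<epsilon>" .
      then have "(1/h) * (\<epsilon> / (43/50)) \<le> (1/h) * ((2 + \<kappa>B / \<kappa>A) * \<epsilon>)"
        using hpos by (intro mult_left_mono) auto
      then show ?thesis by (simp only: mult.assoc)
    qed
    finally show ?thesis .
  qed
  define MH where "MH = integral {0..h} (\<lambda>t. mexp (t *\<^sub>R ((1 / h) *\<^sub>R mlog_series (At - mat 1))))"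
  define MM where "MM = integral {0..h} (\<lambda>s. mexp ((h - s) *\<^sub>R A))"
  define mh where "mh = integral {0..h} (\<lambda>t. exp (t *\<^sub>R ah))"
  define m where "m = integral {0..h} (\<lambda>s. exp ((h - s) *\<^sub>R a))"
  have c1: "continuous_on {0..h} (\<lambda>t. exp (t *\<^sub>R ah))"
    by (rule cont_exp_scale) (rule continuous_on_id)
  have c2: "continuous_on {0..h} (\<lambda>s. exp ((h - s) *\<^sub>R a))"
    by (rule cont_exp_scale) (intro continuous_intros)
  have c3: "continuous_on {0..h} (\<lambda>s. exp ((h - s) *\<^sub>R ah))"
    by (rule cont_exp_scale) (intro continuous_intros)
  have MH_eq: "MH = mat_of mh"
  proof -
    have "MH = integral {0..h} (\<lambda>t. mat_of (exp (t *\<^sub>R ah)))"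
      unfolding MH_def by (simp add: mexp_eq sqm_of_scale[symmetric] Ah_eq[symmetric])
    also have "\<dots> = mat_of mh" unfolding mh_def by (rule int_transfer[OF c1])
    finally show ?thesis .
  qed
  have MM_eq: "MM = mat_of m"
  proof -
    have "MM = integral {0..h} (\<lambda>s. mat_of (exp ((h - s) *\<^sub>R a)))"
      unfolding MM_def by (simp add: mexp_eq sqm_of_scale a_def)
    also have "\<dots> = mat_of m" unfolding m_def by (rule int_transfer[OF c2])
    finally show ?thesis .
  qed
  have mh_refl: "mh = integral {0..h} (\<lambda>s. exp ((h - s) *\<^sub>R ah))"
    unfolding mh_def using int_reflect[OF c1] hpos by simp
  have nm: "norm (m - mh) \<le> 59/50 * (\<epsilon> / (43/50)) * h"
  proof -
    have "m - mh = integral {0..h} (\<lambda>s. exp ((h - s) *\<^sub>R a) - exp ((h - s) *\<^sub>R ah))"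
      unfolding m_def mh_refl by (rule int_diff_cont[OF c2 c3, symmetric])
    also have "norm \<dots> \<le> 59/50 * (\<epsilon> / (43/50)) * h"
    proof (rule int_bound)
      show "continuous_on {0..h} (\<lambda>s. exp ((h - s) *\<^sub>R a) - exp ((h - s) *\<^sub>R ah))"
        using c2 c3 by (intro continuous_intros)
      show "0 \<le> h" using hpos by simp
      show "0 \<le> 59/50 * (\<epsilon> / (43/50))" using eps0 by simp
      fix s assume s: "s \<in> {0..h}"
      define q where "q = (h - s) / h"
      have q0: "0 \<le> q" and q1: "q \<le> 1" using s hpos by (auto simp: q_def field_simps)
      have qa: "(h - s) *\<^sub>R a = q *\<^sub>R y" using hpos by (simp add: q_def y_def)
      have qah: "(h - s) *\<^sub>R ah = q *\<^sub>R z" using hpos by (simp add: q_def ah_def)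
      have n1: "norm (q *\<^sub>R y) \<le> 3/20"
      proof -
        have "norm (q *\<^sub>R y) = q * norm y" using q0 by simp
        also have "\<dots> \<le> 1 * (1/15)" using q0 q1 ny by (intro mult_mono) auto
        finally show ?thesis by simp
      qed
      have n2: "norm (q *\<^sub>R z) \<le> 3/20"
      proof -
        have "norm (q *\<^sub>R z) = q * norm z" using q0 by simp
        also have "\<dots> \<le> 1 * (3/20)" using q0 q1 nz by (intro mult_mono) auto
        finally show ?thesis by simp
      qed
      have "norm (exp (q *\<^sub>R y) - exp (q *\<^sub>R z)) \<le> exp (3/20) * norm (q *\<^sub>R y - q *\<^sub>R z)"
        by (rule norm_exp_diff[OF n1 n2])
      also have "norm (q *\<^sub>R y - q *\<^sub>R z) = q * norm (z - y)"
        using q0 by (simp add: scaleR_diff_right[symmetric] norm_minus_commute)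
      also have "\<dots> \<le> \<epsilon> / (43/50)" using q0 q1 dz mult_mono[of q 1 "norm (z - y)" "\<epsilon> / (43/50)"] by simp
      also have "exp (3/20) * (\<epsilon> / (43/50)) \<le> 59/50 * (\<epsilon> / (43/50))"
        using e320 eps0 by (intro mult_right_mono) auto
      finally show "norm (exp ((h - s) *\<^sub>R a) - exp ((h - s) *\<^sub>R ah)) \<le> 59/50 * (\<epsilon> / (43/50))"
        by (simp add: qa qah)
    qed
    finally show ?thesis .
  qed
  have nmh: "norm (mh - h *\<^sub>R 1) \<le> 9/50 * h"
  proof -
    have "mh - h *\<^sub>R 1 = integral {0..h} (\<lambda>t. exp (t *\<^sub>R ah) - 1)"
      unfolding mh_def using hpos by (simp add: int_diff_cont[OF c1 continuous_on_const])
    also have "norm \<dots> \<le> 9/50 * h"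
    proof (rule int_bound)
      show "continuous_on {0..h} (\<lambda>t. exp (t *\<^sub>R ah) - 1)"
        using c1 by (intro continuous_intros)
      show "0 \<le> h" using hpos by simp
      show "0 \<le> (9/50::real)" by simp
      fix t assume t: "t \<in> {0..h}"
      define q where "q = t / h"
      have q0: "0 \<le> q" and q1: "q \<le> 1" using t hpos by (auto simp: q_def field_simps)
      have qah: "t *\<^sub>R ah = q *\<^sub>R z" using hpos by (simp add: q_def ah_def)
      have n2: "norm (q *\<^sub>R z) \<le> 3/20"
      proof -
        have "norm (q *\<^sub>R z) = q * norm z" using q0 by simp
        also have "\<dots> \<le> 1 * (3/20)" using q0 q1 nz by (intro mult_mono) auto
        finally show ?thesis by simp
      qed
      have "norm (exp (q *\<^sub>R z) - exp 0) \<le> exp (3/20) * norm (q *\<^sub>R z - 0)"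
        by (rule norm_exp_diff[OF n2]) simp
      also have "\<dots> \<le> 59/50 * (3/20)" using e320 n2 by (intro mult_mono) auto
      finally show "norm (exp (t *\<^sub>R ah) - 1) \<le> 9/50" by (simp add: qah)
    qed
    finally show ?thesis .
  qed
  have MHN: "spec_norm (MH - h *\<^sub>R mat 1) \<le> 9/50 * h"
    using nmh by (simp add: MH_eq norm_sqm_of[symmetric] sqm_of_diff sqm_of_scale sqm_of_one)
  have low: "41/50 * h * norm x \<le> norm (MH *v x)" for x
  proof -
    have "MH *v x = h *\<^sub>R x + (MH - h *\<^sub>R mat 1) *v x"
      by (simp add: matrix_vector_mult_diff_rdistrib scaleR_matrix_vector_assoc[symmetric])
    then have "norm (h *\<^sub>R x) \<le> norm (MH *v x) + norm ((MH - h *\<^sub>R mat 1) *v x)"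
      by (metis add_diff_cancel_right' norm_triangle_ineq4 order_trans add.commute norm_minus_commute order_refl diff_add_cancel norm_triangle_sub)
    moreover have "norm ((MH - h *\<^sub>R mat 1) *v x) \<le> 9/50 * h * norm x"
      using spec_norm_apply[of "MH - h *\<^sub>R mat 1" x] MHN
      by (meson mult_right_mono norm_ge_zero order_trans)
    ultimately show ?thesis using hpos by simp
  qed
  have invMH: "invertible MH"
  proof -
    have "\<forall>x. MH *v x = 0 \<longrightarrow> x = 0"
    proof (intro allI impI)
      fix x assume "MH *v x = 0"
      then have "41/50 * h * norm x \<le> 0" using low[of x] by simp
      then show "x = 0" using hpos by (simp add: mult_le_0_iff)
    qed
    then show ?thesis by (simp add: invertible_left_inverse matrix_left_invertible_ker)
  qed
  define Mi where "Mi = matrix_inv MH"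
  have Mi1: "MH ** Mi = mat 1" and Mi2: "Mi ** MH = mat 1"
    using matrix_inv_props[OF invMH] by (simp_all add: Mi_def)
  have nMi: "spec_norm Mi \<le> 1 / (41/50 * h)"
  proof (rule spec_norm_le)
    fix v
    have "MH *v (Mi *v v) = v" by (simp add: matrix_vector_mul_assoc Mi1)
    then have "41/50 * h * norm (Mi *v v) \<le> norm v" using low[of "Mi *v v"] by simp
    then show "norm (Mi *v v) \<le> 1 / (41/50 * h) * norm v" using hpos by (simp add: field_simps)
  qed
  have Beq: "Mi ** Bt - B = Mi ** ((Bt - MM ** B) + (MM - MH) ** B)"
  proof -
    have e1: "(Bt - MM ** B) + (MM - MH) ** B = Bt - MH ** B"
      by (simp add: mat_diff_rdistrib)
    have "Mi ** (Bt - MH ** B) = Mi ** Bt - (Mi ** MH) ** B"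
      by (simp only: mat_diff_ldistrib matrix_mul_assoc)
    also have "\<dots> = Mi ** Bt - B" by (simp add: Mi2)
    finally show ?thesis unfolding e1 by simp
  qed
  have nMMH: "spec_norm (MM - MH) \<le> 59/50 * (\<epsilon> / (43/50)) * h"
    using nm by (simp add: MM_eq MH_eq norm_sqm_of[symmetric] sqm_of_diff)
  have nX: "spec_norm ((Bt - MM ** B) + (MM - MH) ** B) \<le> \<epsilon> + 59/50 * (\<epsilon> / (43/50)) * h * \<kappa>B"
  proof -
    have "spec_norm ((Bt - MM ** B) + (MM - MH) ** B) \<le> spec_norm (Bt - MM ** B) + spec_norm ((MM - MH) ** B)"
      by (rule spec_norm_add)
    moreover have "spec_norm (Bt - MM ** B) \<le> \<epsilon>" using assms(8) by (simp add: MM_def)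
    moreover have "spec_norm ((MM - MH) ** B) \<le> 59/50 * (\<epsilon> / (43/50)) * h * \<kappa>B"
    proof -
      have "spec_norm ((MM - MH) ** B) \<le> spec_norm (MM - MH) * spec_norm B" by (rule spec_norm_mult)
      also have "\<dots> \<le> 59/50 * (\<epsilon> / (43/50)) * h * \<kappa>B"
        using nMMH assms(5) spec_norm_ge0[of B] spec_norm_ge0[of "MM - MH"]
        by (intro mult_mono) auto
      finally show ?thesis .
    qed
    ultimately show ?thesis by linarith
  qed
  have part2: "spec_norm (Mi ** Bt - B) \<le> (1 / h) * (2 + \<kappa>B / \<kappa>A) * \<epsilon>"
  proof -
    have "spec_norm (Mi ** Bt - B) \<le> spec_norm Mi * spec_norm ((Bt - MM ** B) + (MM - MH) ** B)"
      unfolding Beq by (rule spec_norm_mult)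
    also have "\<dots> \<le> 1 / (41/50 * h) * (\<epsilon> + 59/50 * (\<epsilon> / (43/50)) * h * \<kappa>B)"
    proof (rule mult_mono[OF nMi nX])
      show "0 \<le> 1 / (41/50 * h)" using hpos by simp
      show "0 \<le> spec_norm ((Bt - MM ** B) + (MM - MH) ** B)" by (rule spec_norm_ge0)
    qed
    also have "\<dots> = (50/41) * \<epsilon> / h + (50/41) * (59/50) * (50/43) * \<epsilon> * \<kappa>B"
      using hpos by (simp add: field_simps)
    also have "\<dots> \<le> 2 * \<epsilon> / h + 15 * \<epsilon> * \<kappa>B"
    proof (rule add_mono)
      show "(50/41) * \<epsilon> / h \<le> 2 * \<epsilon> / h" using eps0 hpos by (intro divide_right_mono) auto
      show "(50/41) * (59/50) * (50/43) * \<epsilon> * \<kappa>B \<le> 15 * \<epsilon> * \<kappa>B"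
        using eps0 assms(3) by (intro mult_right_mono) auto
    qed
    also have "\<dots> = (1 / h) * (2 + \<kappa>B / \<kappa>A) * \<epsilon>"
      using hpos by (simp add: kr field_simps)
    finally show ?thesis .
  qed
  show ?thesis using part1 part2 by (simp add: Mi_def MH_def)
qed

end
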